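(* Fix one of the three notions of free operations (detection-incoherent, creation-incoherent, detection-creation-incoherent). A functional $M$ from quantum operations to $[0,\infty)$ is a measure if and only if all of the following hold: $M(\Theta)=0\Leftrightarrow\Theta$ is free; $M(\Theta)\ge M(\Phi\circ\Theta)$ for all $\Theta$ and all free $\Phi$; $M(\Theta)\ge M(\Theta\circ\Phi)$ for all $\Theta$ and all free $\Phi$; $M(\Theta)\ge M(\Theta\otimes\mathbb{1})$ for all $\Theta$, where $\mathbb{1}$ is the identity channel on an ancillary system; and $M$ is convex.
   Context: Every finite-dimensional system carries a fixed orthonormal incoherent basis $\{|i\rangle\}$; composite systems use the product basis. The total dephasing map is $\Delta(\rho)=\sum_i|i\rangle\langle i|\rho|i\rangle\langle i|$ (tensor product on composite systems). A quantum operation is a completely positive trace-preserving linear map. $\Phi$ is detection-incoherent iff $\Delta\Phi=\Delta\Phi\Delta$, creation-incoherent iff $\Phi\Delta=\Delta\Phi\Delta$, detection-creation-incoherent iff $\Delta\Phi=\Phi\Delta$. A super-operation is free iff it is a finite composition of elemental super-operations $\Theta\mapsto\Phi\circ\Theta$, $\Theta\mapsto\Theta\circ\Phi$, $\Theta\mapsto\Theta\otimes\Phi$, $\Theta\mapsto\Phi\otimes\Theta$ with $\Phi$ free. A measure is a functional $M$ from quantum operations to $[0,\infty)$ such that (i) $M(\Theta)=0$ iff $\Theta$ is free; (ii) $M(\mathcal{F}[\Theta])\le M(\Theta)$ for all $\Theta$ and all free super-operations $\mathcal{F}$; (iii) $M$ is convex: $M(t\Theta+(1-t)\Psi)\le tM(\Theta)+(1-t)M(\Psi)$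 for $t\in[0,1]$ and $\Theta,\Psi$ with the same input and output systems. *)

theory Defs
  imports Complex_Main "Jordan_Normal_Form.Matrix"
begin

text \<open>A system is identified by its dimension d (at least 1); its incoherent basis is the
standard basis. A composite system of dimensions d1 and d2 is the system of dimension d1*d2
whose standard basis is the product basis, the pair (i,k) being indexed by i*d2+k
(Kronecker ordering). A (candidate) operation is a record holding its input dimension,
its output dimension and the map on matrices; the map is normalised to the zero matrix
outside the input carrier, so that records coincide iff the operations coincide.\<close>

record qop =
  qin :: nat
  qout :: nat
  qmap :: "complex mat \<Rightarrow> complex mat"

definition mat_unit :: "nat \<Rightarrow> nat \<Rightarrow> nat \<Rightarrow> complex mat" where
  "mat_unit n i j = mat n n (\<lambda>(a,b). if a = i \<and> b = j then 1 else 0)"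

definition mtrace :: "nat \<Rightarrow> complex mat \<Rightarrow> complex" where
  "mtrace n A = (\<Sum>i<n. A $$ (i,i))"

definition psd :: "nat \<Rightarrow> complex mat \<Rightarrow> bool" where
  "psd n A \<longleftrightarrow> A \<in> carrier_mat n n \<and>
     (\<forall>v :: nat \<Rightarrow> complex. let z = (\<Sum>i<n. \<Sum>j<n. cnj (v i) * A $$ (i,j) * v j)
                               in Im z = 0 \<and> Re z \<ge> 0)"

definition tens_map :: "nat \<Rightarrow> nat \<Rightarrow> (complex mat \<Rightarrow> complex mat) \<Rightarrow>
                        nat \<Rightarrow> nat \<Rightarrow> (complex mat \<Rightarrow> complex mat) \<Rightarrow> complex mat \<Rightarrow> complex mat" where
  "tens_map n1 m1 f n2 m2 g A =
     (if A \<in> carrier_mat (n1*n2) (n1*n2) then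
        mat (m1*m2) (m1*m2) (\<lambda>(p,q).
          \<Sum>i<n1. \<Sum>j<n1. \<Sum>k<n2. \<Sum>l<n2.
             A $$ (i*n2+k, j*n2+l) * f (mat_unit n1 i j) $$ (p div m2, q div m2)
                                  * g (mat_unit n2 k l) $$ (p mod m2, q mod m2))
      else 0\<^sub>m (m1*m2) (m1*m2))"

definition id_map :: "nat \<Rightarrow> complex mat \<Rightarrow> complex mat" where
  "id_map k A = (if A \<in> carrier_mat k k then A else 0\<^sub>m k k)"

definition is_qop :: "qop \<Rightarrow> bool" where
  "is_qop \<Theta> \<longleftrightarrow> (let n = qin \<Theta>; m = qout \<Theta>; f = qmap \<Theta> in
     0 < n \<and> 0 < m \<and>
     (\<forall>A. A \<notin> carrier_mat n n \<longrightarrow> f A = 0\<^sub>m m m) \<and>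
     (\<forall>A \<in> carrier_mat n n. f A \<in> carrier_mat m m) \<and>
     (\<forall>A \<in> carrier_mat n n. \<forall>B \<in> carrier_mat n n. \<forall>c::complex.
         f (c \<cdot>\<^sub>m A + B) = c \<cdot>\<^sub>m f A + f B) \<and>
     (\<forall>A \<in> carrier_mat n n. mtrace m (f A) = mtrace n A) \<and>
     (\<forall>k>0. \<forall>A. psd (n*k) A \<longrightarrow> psd (m*k) (tens_map n m f k k (id_map k) A)))"

definition qcomp :: "qop \<Rightarrow> qop \<Rightarrow> qop" where
  "qcomp \<Phi> \<Theta> = \<lparr> qin = qin \<Theta>, qout = qout \<Phi>,
     qmap = (\<lambda>A. if A \<in> carrier_mat (qin \<Theta>) (qin \<Theta>) then qmap \<Phi> (qmap \<Theta> A)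
                 else 0\<^sub>m (qout \<Phi>) (qout \<Phi>)) \<rparr>"

definition qtens :: "qop \<Rightarrow> qop \<Rightarrow> qop" where
  "qtens \<Theta> \<Phi> = \<lparr> qin = qin \<Theta> * qin \<Phi>, qout = qout \<Theta> * qout \<Phi>,
     qmap = tens_map (qin \<Theta>) (qout \<Theta>) (qmap \<Theta>) (qin \<Phi>) (qout \<Phi>) (qmap \<Phi>) \<rparr>"

definition qid :: "nat \<Rightarrow> qop" where
  "qid k = \<lparr> qin = k, qout = k, qmap = id_map k \<rparr>"

definition qmix :: "real \<Rightarrow> qop \<Rightarrow> qop \<Rightarrow> qop" where
  "qmix t \<Theta> \<Psi> = \<lparr> qin = qin \<Theta>, qout = qout \<Theta>,
     qmap = (\<lambda>A. if A \<in> carrier_mat (qin \<Theta>) (qin \<Theta>)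
                 then complex_of_real t \<cdot>\<^sub>m qmap \<Theta> A + complex_of_real (1 - t) \<cdot>\<^sub>m qmap \<Psi> A
                 else 0\<^sub>m (qout \<Theta>) (qout \<Theta>)) \<rparr>"

definition deph :: "nat \<Rightarrow> complex mat \<Rightarrow> complex mat" where
  "deph n A = mat n n (\<lambda>(i,j). if i = j then A $$ (i,j) else 0)"

datatype notion = DI | CI | DCI

definition free :: "notion \<Rightarrow> qop \<Rightarrow> bool" where
  "free X \<Phi> \<longleftrightarrow> is_qop \<Phi> \<and> (let n = qin \<Phi>; m = qout \<Phi>; f = qmap \<Phi> in
     (case X of
        DI \<Rightarrow> (\<forall>A \<in> carrier_mat n n. deph m (f A) = deph m (f (deph n A)))
      | CI \<Rightarrow> (\<forall>A \<in> carrier_mat n n. f (deph n A) = deph m (f (deph n A)))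
      | DCI \<Rightarrow> (\<forall>A \<in> carrier_mat n n. deph m (f A) = f (deph n A))))"

datatype elem = Post qop | Pre qop | TensR qop | TensL qop

fun elem_op :: "elem \<Rightarrow> qop" where
  "elem_op (Post \<Phi>) = \<Phi>" | "elem_op (Pre \<Phi>) = \<Phi>"
| "elem_op (TensR \<Phi>) = \<Phi>" | "elem_op (TensL \<Phi>) = \<Phi>"

fun elem_apply :: "elem \<Rightarrow> qop \<Rightarrow> qop option" where
  "elem_apply (Post \<Phi>) \<Theta> = (if qin \<Phi> = qout \<Theta> then Some (qcomp \<Phi> \<Theta>) else None)"
| "elem_apply (Pre \<Phi>) \<Theta> = (if qout \<Phi> = qin \<Theta> then Some (qcomp \<Theta> \<Phi>) else None)"
| "elem_apply (TensR \<Phi>) \<Theta> = Some (qtens \<Theta> \<Phi>)"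
| "elem_apply (TensL \<Phi>) \<Theta> = Some (qtens \<Phi> \<Theta>)"

text \<open>A super-operation given as a finite list of elemental ones, applied first to last.\<close>
fun sop_apply :: "elem list \<Rightarrow> qop \<Rightarrow> qop option" where
  "sop_apply [] \<Theta> = Some \<Theta>"
| "sop_apply (e # es) \<Theta> = (case elem_apply e \<Theta> of None \<Rightarrow> None | Some \<Theta>' \<Rightarrow> sop_apply es \<Theta>')"

definition free_sop :: "notion \<Rightarrow> elem list \<Rightarrow> bool" where
  "free_sop X F \<longleftrightarrow> (\<forall>e \<in> set F. free X (elem_op e))"

definition convex_meas :: "(qop \<Rightarrow> real) \<Rightarrow> bool" where
  "convex_meas M \<longleftrightarrow> (\<forall>\<Theta> \<Psi> t. is_qop \<Theta> \<longrightarrow> is_qop \<Psi> \<longrightarrow> qin \<Theta> = qin \<Psi> \<longrightarrow>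
      qout \<Theta> = qout \<Psi> \<longrightarrow> 0 \<le> t \<longrightarrow> t \<le> 1 \<longrightarrow>
      M (qmix t \<Theta> \<Psi>) \<le> t * M \<Theta> + (1 - t) * M \<Psi>)"

definition is_measure :: "notion \<Rightarrow> (qop \<Rightarrow> real) \<Rightarrow> bool" where
  "is_measure X M \<longleftrightarrow>
     (\<forall>\<Theta>. is_qop \<Theta> \<longrightarrow> 0 \<le> M \<Theta>) \<and>
     (\<forall>\<Theta>. is_qop \<Theta> \<longrightarrow> (M \<Theta> = 0 \<longleftrightarrow> free X \<Theta>)) \<and>
     (\<forall>F \<Theta> \<Theta>'. free_sop X F \<longrightarrow> is_qop \<Theta> \<longrightarrow> sop_apply F \<Theta> = Some \<Theta>' \<longrightarrow> M \<Theta>' \<le> M \<Theta>) \<and>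
     convex_meas M"

end

theory Submission
  imports Defs
begin


definition lin :: "nat \<Rightarrow> nat \<Rightarrow> (complex mat \<Rightarrow> complex mat) \<Rightarrow> bool" where
  "lin n m f \<longleftrightarrow> (\<forall>A\<in>carrier_mat n n. f A \<in> carrier_mat m m) \<and>
     (\<forall>A\<in>carrier_mat n n. \<forall>B\<in>carrier_mat n n. \<forall>c::complex. f (c \<cdot>\<^sub>m A + B) = c \<cdot>\<^sub>m f A + f B)"

lemma mat_unit_carrier[simp]: "mat_unit n i j \<in> carrier_mat n n"
  by (simp add: mat_unit_def)

lemma mat_unit_index[simp]: "a < n \<Longrightarrow> b < n \<Longrightarrow> mat_unit n i j $$ (a,b) = (if a = i \<and> b = j then 1 else 0)"
  by (simp add: mat_unit_def)

lemma mat_unit_dim[simp]: "dim_row (mat_unit n i j) = n" "dim_col (mat_unit n i j) = n"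
  by (simp_all add: mat_unit_def)

lemma lin_carrier: "lin n m f \<Longrightarrow> A \<in> carrier_mat n n \<Longrightarrow> f A \<in> carrier_mat m m"
  by (simp add: lin_def)

lemma lin_zero: assumes "lin n m f" shows "f (0\<^sub>m n n) = 0\<^sub>m m m"
proof -
  have "f ((-1) \<cdot>\<^sub>m 0\<^sub>m n n + 0\<^sub>m n n) = (-1) \<cdot>\<^sub>m f (0\<^sub>m n n) + f (0\<^sub>m n n)"
    using assms unfolding lin_def by (meson zero_carrier_mat)
  moreover have "(-1) \<cdot>\<^sub>m 0\<^sub>m n n + 0\<^sub>m n n = (0\<^sub>m n n :: complex mat)" by (rule eq_matI) auto
  moreover have "f (0\<^sub>m n n) \<in> carrier_mat m m" using lin_carrier[OF assms] by simp
  moreover have "X \<in> carrier_mat m m \<Longrightarrow> (-1) \<cdot>\<^sub>m X + X = 0\<^sub>m m m" for X :: "complex mat"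
    by (rule eq_matI) auto
  ultimately show ?thesis by metis
qed

lemma lin_expand_aux:
  assumes "lin n m f" "A \<in> carrier_mat n n" "p < m" "q < m" "T \<subseteq> {..<n} \<times> {..<n}"
  shows "f (mat n n (\<lambda>x. if x \<in> T then A $$ x else 0)) $$ (p,q) = (\<Sum>x\<in>T. A $$ x * f (mat_unit n (fst x) (snd x)) $$ (p,q))"
proof -
  have "finite T" using assms(5) finite_subset by blast
  then show ?thesis using assms(5)
  proof (induction T rule: finite_induct)
    case empty
    have "mat n n (\<lambda>x. if x \<in> {} then A $$ x else 0) = 0\<^sub>m n n" by (rule eq_matI) auto
    then show ?case using lin_zero[OF assms(1)] assms(3,4) by simp
  next
    case (insert x T)
    obtain i j where x: "x = (i,j)" by fastforce
    have ij: "i < n" "j < n" using insert x by auto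
    have eq: "mat n n (\<lambda>y. if y \<in> insert x T then A $$ y else 0) =
       (A $$ x) \<cdot>\<^sub>m mat_unit n i j + mat n n (\<lambda>y. if y \<in> T then A $$ y else 0)"
      by (rule eq_matI) (use insert x in \<open>auto simp: mat_unit_def\<close>)
    have c1: "f (mat_unit n i j) \<in> carrier_mat m m" "f (mat n n (\<lambda>y. if y \<in> T then A $$ y else 0)) \<in> carrier_mat m m"
      using lin_carrier[OF assms(1)] by auto
    have "f (mat n n (\<lambda>y. if y \<in> insert x T then A $$ y else 0)) =
       (A $$ x) \<cdot>\<^sub>m f (mat_unit n i j) + f (mat n n (\<lambda>y. if y \<in> T then A $$ y else 0))"
      unfolding eq using assms(1) unfolding lin_def by auto
    then show ?case using insert c1 assms(3,4) x by simp
  qed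
qed

lemma lin_expand:
  assumes "lin n m f" "A \<in> carrier_mat n n" "p < m" "q < m"
  shows "f A $$ (p,q) = (\<Sum>i<n. \<Sum>j<n. A $$ (i,j) * f (mat_unit n i j) $$ (p,q))"
proof -
  have "mat n n (\<lambda>x. if x \<in> {..<n} \<times> {..<n} then A $$ x else 0) = A"
    by (rule eq_matI) (use assms(2) in auto)
  then have "f A $$ (p,q) = (\<Sum>x\<in>{..<n} \<times> {..<n}. A $$ x * f (mat_unit n (fst x) (snd x)) $$ (p,q))"
    using lin_expand_aux[OF assms, of "{..<n} \<times> {..<n}"] by simp
  also have "\<dots> = (\<Sum>i<n. \<Sum>j<n. A $$ (i,j) * f (mat_unit n i j) $$ (p,q))"
    by (simp add: sum.cartesian_product case_prod_beta)
  finally show ?thesis .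
qed

lemma sum_split_mult: "(\<Sum>P<m*k. f P) = (\<Sum>x<m. \<Sum>c<k. f (x*k+c :: nat))"
proof -
  have "(\<Sum>P\<in>{x*k..<x*k+k}. f P) = (\<Sum>c<k. f (x*k+c))" for x
    by (rule sum.reindex_bij_witness[where j="\<lambda>a. a - x*k" and i="\<lambda>b. x*k + b"]) auto
  then show ?thesis unfolding sum.nat_group[symmetric] by simp
qed

lemma sum_single: "finite S \<Longrightarrow> a \<in> S \<Longrightarrow> (\<And>i. i \<in> S \<Longrightarrow> i \<noteq> a \<Longrightarrow> F i = 0) \<Longrightarrow> sum F S = F a"
  by (metis (no_types, lifting) sum.remove sum.neutral DiffD1 DiffD2 singletonI add.right_neutral)

lemma tens_map_carrier[simp]: "tens_map n1 m1 f n2 m2 g A \<in> carrier_mat (m1*m2) (m1*m2)"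
  by (simp add: tens_map_def)

lemma tens_map_out: "A \<notin> carrier_mat (n1*n2) (n1*n2) \<Longrightarrow> tens_map n1 m1 f n2 m2 g A = 0\<^sub>m (m1*m2) (m1*m2)"
  by (simp add: tens_map_def)

lemma tens_map_index: "A \<in> carrier_mat (n1*n2) (n1*n2) \<Longrightarrow> P < m1*m2 \<Longrightarrow> Q < m1*m2 \<Longrightarrow>
  tens_map n1 m1 f n2 m2 g A $$ (P,Q) = (\<Sum>i<n1. \<Sum>j<n1. \<Sum>k<n2. \<Sum>l<n2.
             A $$ (i*n2+k, j*n2+l) * f (mat_unit n1 i j) $$ (P div m2, Q div m2)
                                  * g (mat_unit n2 k l) $$ (P mod m2, Q mod m2))"
  by (simp add: tens_map_def)

lemma id_map_unit[simp]: "id_map k (mat_unit k c d) = mat_unit k c d"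
  by (simp add: id_map_def)

lemma tens_id_right:
  assumes "A \<in> carrier_mat (n*k) (n*k)" "P < m*k" "Q < m*k"
  shows "tens_map n m f k k (id_map k) A $$ (P,Q) =
    (\<Sum>i<n. \<Sum>j<n. A $$ (i*k + P mod k, j*k + Q mod k) * f (mat_unit n i j) $$ (P div k, Q div k))"
proof -
  have k: "k > 0" using assms(2) by (cases k) auto
  have "tens_map n m f k k (id_map k) A $$ (P,Q) = (\<Sum>i<n. \<Sum>j<n. \<Sum>c<k. \<Sum>d<k.
             A $$ (i*k+c, j*k+d) * f (mat_unit n i j) $$ (P div k, Q div k)
                                  * (if P mod k = c \<and> Q mod k = d then 1 else 0))"
    using assms k by (simp add: tens_map_index)
  also have "\<dots> = (\<Sum>i<n. \<Sum>j<n. A $$ (i*k + P mod k, j*k + Q mod k) * f (mat_unit n i j) $$ (P div k, Q div k))"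
  proof (intro sum.cong refl)
    fix i j
    show "(\<Sum>c<k. \<Sum>d<k. A $$ (i*k+c, j*k+d) * f (mat_unit n i j) $$ (P div k, Q div k)
                                  * (if P mod k = c \<and> Q mod k = d then 1 else 0)) =
          A $$ (i*k + P mod k, j*k + Q mod k) * f (mat_unit n i j) $$ (P div k, Q div k)"
      using k by (subst sum_single[where a="P mod k"], simp, simp, simp,
                  subst sum_single[where a="Q mod k"], auto)
  qed
  finally show ?thesis .
qed

lemma tens_id_left:
  assumes "A \<in> carrier_mat (n*n2) (n*n2)" "P < n*m" "Q < n*m"
  shows "tens_map n n (id_map n) n2 m g A $$ (P,Q) =
    (\<Sum>c<n2. \<Sum>d<n2. A $$ ((P div m)*n2 + c, (Q div m)*n2 + d) * g (mat_unit n2 c d) $$ (P mod m, Q mod m))"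
proof -
  have m: "m > 0" using assms(2) by (cases m) auto
  have lt: "P div m < n" "Q div m < n" using assms m by (auto simp: less_mult_imp_div_less mult.commute)
  have "tens_map n n (id_map n) n2 m g A $$ (P,Q) = (\<Sum>i<n. \<Sum>j<n. \<Sum>c<n2. \<Sum>d<n2.
             A $$ (i*n2+c, j*n2+d) * (if P div m = i \<and> Q div m = j then 1 else 0)
                                  * g (mat_unit n2 c d) $$ (P mod m, Q mod m))"
    using assms m lt by (simp add: tens_map_index)
  also have "\<dots> = (\<Sum>c<n2. \<Sum>d<n2. A $$ ((P div m)*n2 + c, (Q div m)*n2 + d) * g (mat_unit n2 c d) $$ (P mod m, Q mod m))"
    using lt by (subst sum_single[where a="P div m"], simp, simp, simp,
                  subst sum_single[where a="Q div m"], auto)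
  finally show ?thesis .
qed



lemma tens_map_dim[simp]: "dim_row (tens_map n1 m1 f n2 m2 g A) = m1*m2" "dim_col (tens_map n1 m1 f n2 m2 g A) = m1*m2"
  using tens_map_carrier[of n1 m1 f n2 m2 g A] by (auto simp del: tens_map_carrier)

lemma swap4:
  fixes \<alpha> :: "'s \<Rightarrow> 't \<Rightarrow> 'a::comm_semiring_1"
  shows "(\<Sum>u\<in>U. \<Sum>v\<in>V. (\<Sum>s\<in>S. \<Sum>t\<in>T. \<alpha> s t * F s u * G t v) * X u * Y v) =
   (\<Sum>s\<in>S. \<Sum>t\<in>T. \<alpha> s t * (\<Sum>u\<in>U. F s u * X u) * (\<Sum>v\<in>V. G t v * Y v))"
proof -
  have "(\<Sum>u\<in>U. \<Sum>v\<in>V. (\<Sum>s\<in>S. \<Sum>t\<in>T. \<alpha> s t * F s u * G t v) * X u * Y v) =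
        (\<Sum>u\<in>U. \<Sum>v\<in>V. \<Sum>s\<in>S. \<Sum>t\<in>T. \<alpha> s t * F s u * X u * (G t v * Y v))"
    by (simp add: sum_distrib_right sum_distrib_left mult_ac)
  also have "\<dots> = (\<Sum>u\<in>U. \<Sum>s\<in>S. \<Sum>v\<in>V. \<Sum>t\<in>T. \<alpha> s t * F s u * X u * (G t v * Y v))"
    by (rule sum.cong[OF refl], rule sum.swap)
  also have "\<dots> = (\<Sum>s\<in>S. \<Sum>u\<in>U. \<Sum>v\<in>V. \<Sum>t\<in>T. \<alpha> s t * F s u * X u * (G t v * Y v))"
    by (rule sum.swap)
  also have "\<dots> = (\<Sum>s\<in>S. \<Sum>u\<in>U. \<Sum>t\<in>T. \<Sum>v\<in>V. \<alpha> s t * F s u * X u * (G t v * Y v))"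
    by (rule sum.cong[OF refl], rule sum.cong[OF refl], rule sum.swap)
  also have "\<dots> = (\<Sum>s\<in>S. \<Sum>t\<in>T. \<Sum>u\<in>U. \<Sum>v\<in>V. \<alpha> s t * F s u * X u * (G t v * Y v))"
    by (rule sum.cong[OF refl], rule sum.swap)
  also have "\<dots> = (\<Sum>s\<in>S. \<Sum>t\<in>T. \<alpha> s t * (\<Sum>u\<in>U. F s u * X u) * (\<Sum>v\<in>V. G t v * Y v))"
    by (simp add: sum_distrib_left sum_distrib_right mult_ac)
  finally show ?thesis .
qed

lemma dsum: "(\<Sum>i<n. \<Sum>j<n. h i j) = (\<Sum>u\<in>{..<n}\<times>{..<n}. h (fst u) (snd u))"
  by (simp add: sum.cartesian_product case_prod_beta)

lemma divmod_simps[simp]: "k < m \<Longrightarrow> (i*m + k) div m = (i::nat)" "k < m \<Longrightarrow> (i*m + k) mod m = (k::nat)"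
  by auto

lemma lt_mult_add: "i < n \<Longrightarrow> k < m \<Longrightarrow> i*m + k < n*(m::nat)"
proof -
  assume "i < n" "k < m"
  then have "i*m + k < i*m + m" by simp
  also have "\<dots> = (i+1)*m" by simp
  also have "\<dots> \<le> n*m" using \<open>i<n\<close> by (intro mult_right_mono) auto
  finally show ?thesis .
qed

lemma div_lt: "P < n*(m::nat) \<Longrightarrow> P div m < n"
  by (simp add: less_mult_imp_div_less)
lemma mod_lt: "P < n*(m::nat) \<Longrightarrow> P mod m < m"
  by (cases m) auto

lemma tens_comp:
  assumes f1: "lin m1 m1' f1" and g1: "lin m2 m2' g1"
    and f2: "\<And>i j. i < n1 \<Longrightarrow> j < n1 \<Longrightarrow> f2 (mat_unit n1 i j) \<in> carrier_mat m1 m1"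
    and g2: "\<And>i j. i < n2 \<Longrightarrow> j < n2 \<Longrightarrow> g2 (mat_unit n2 i j) \<in> carrier_mat m2 m2"
    and A: "A \<in> carrier_mat (n1*n2) (n1*n2)"
  shows "tens_map m1 m1' f1 m2 m2' g1 (tens_map n1 m1 f2 n2 m2 g2 A) =
         tens_map n1 m1' (\<lambda>B. f1 (f2 B)) n2 m2' (\<lambda>B. g1 (g2 B)) A"
proof (rule eq_matI)
  fix P Q assume PQ: "P < dim_row (tens_map n1 m1' (\<lambda>B. f1 (f2 B)) n2 m2' (\<lambda>B. g1 (g2 B)) A)"
     "Q < dim_col (tens_map n1 m1' (\<lambda>B. f1 (f2 B)) n2 m2' (\<lambda>B. g1 (g2 B)) A)"
  then have P: "P < m1'*m2'" and Q: "Q < m1'*m2'" by auto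
  define x y x' y' where "x = P div m2'" "y = Q div m2'" "x' = P mod m2'" "y' = Q mod m2'"
  have xy: "x < m1'" "y < m1'" "x' < m2'" "y' < m2'" using P Q div_lt mod_lt unfolding x_y_x'_y'_def by auto
  let ?B = "tens_map n1 m1 f2 n2 m2 g2 A"
  let ?\<alpha> = "\<lambda>s t. A $$ (fst s * n2 + fst t, snd s * n2 + snd t)"
  let ?F = "\<lambda>s u. f2 (mat_unit n1 (fst s) (snd s)) $$ u"
  let ?G = "\<lambda>t v. g2 (mat_unit n2 (fst t) (snd t)) $$ v"
  let ?X = "\<lambda>u. f1 (mat_unit m1 (fst u) (snd u)) $$ (x, y)"
  let ?Y = "\<lambda>v. g1 (mat_unit m2 (fst v) (snd v)) $$ (x', y')"
  have Bent: "?B $$ (fst u * m2 + fst v, snd u * m2 + snd v) =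
     (\<Sum>s\<in>{..<n1}\<times>{..<n1}. \<Sum>t\<in>{..<n2}\<times>{..<n2}. ?\<alpha> s t * ?F s u * ?G t v)"
    if "u \<in> {..<m1}\<times>{..<m1}" "v \<in> {..<m2}\<times>{..<m2}" for u v
  proof -
    have "fst u * m2 + fst v < m1*m2" "snd u * m2 + snd v < m1*m2" using that lt_mult_add by auto
    then have "?B $$ (fst u * m2 + fst v, snd u * m2 + snd v) = (\<Sum>i<n1. \<Sum>j<n1. \<Sum>k<n2. \<Sum>l<n2.
             A $$ (i*n2+k, j*n2+l) * f2 (mat_unit n1 i j) $$ (fst u, snd u)
                                  * g2 (mat_unit n2 k l) $$ (fst v, snd v))"
      using A that by (simp add: tens_map_index mem_Times_iff)
    also have "\<dots> = (\<Sum>s\<in>{..<n1}\<times>{..<n1}. \<Sum>t\<in>{..<n2}\<times>{..<n2}. ?\<alpha> s t * ?F s u * ?G t v)"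
      by (simp add: dsum)
    finally show ?thesis .
  qed
  have "tens_map m1 m1' f1 m2 m2' g1 ?B $$ (P,Q) = (\<Sum>i<m1. \<Sum>j<m1. \<Sum>k<m2. \<Sum>l<m2.
             ?B $$ (i*m2+k, j*m2+l) * f1 (mat_unit m1 i j) $$ (x, y)
                                  * g1 (mat_unit m2 k l) $$ (x', y'))"
    using P Q by (simp add: tens_map_index x_y_x'_y'_def)
  also have "\<dots> = (\<Sum>u\<in>{..<m1}\<times>{..<m1}. \<Sum>v\<in>{..<m2}\<times>{..<m2}.
      ?B $$ (fst u * m2 + fst v, snd u * m2 + snd v) * ?X u * ?Y v)"
    by (simp add: dsum)
  also have "\<dots> = (\<Sum>u\<in>{..<m1}\<times>{..<m1}. \<Sum>v\<in>{..<m2}\<times>{..<m2}.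
      (\<Sum>s\<in>{..<n1}\<times>{..<n1}. \<Sum>t\<in>{..<n2}\<times>{..<n2}. ?\<alpha> s t * ?F s u * ?G t v) * ?X u * ?Y v)"
    by (intro sum.cong refl, subst Bent) auto
  also have "\<dots> = (\<Sum>s\<in>{..<n1}\<times>{..<n1}. \<Sum>t\<in>{..<n2}\<times>{..<n2}. ?\<alpha> s t *
      (\<Sum>u\<in>{..<m1}\<times>{..<m1}. ?F s u * ?X u) * (\<Sum>v\<in>{..<m2}\<times>{..<m2}. ?G t v * ?Y v))"
    by (rule swap4)
  also have "\<dots> = (\<Sum>s\<in>{..<n1}\<times>{..<n1}. \<Sum>t\<in>{..<n2}\<times>{..<n2}. ?\<alpha> s t *
      f1 (f2 (mat_unit n1 (fst s) (snd s))) $$ (x,y) * g1 (g2 (mat_unit n2 (fst t) (snd t))) $$ (x',y'))"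
  proof (intro sum.cong refl)
    fix s t assume s: "s \<in> {..<n1}\<times>{..<n1}" and t: "t \<in> {..<n2}\<times>{..<n2}"
    have "f1 (f2 (mat_unit n1 (fst s) (snd s))) $$ (x,y) = (\<Sum>u\<in>{..<m1}\<times>{..<m1}. ?F s u * ?X u)"
      using lin_expand[OF f1 f2[of "fst s" "snd s"] xy(1,2)] s by (simp add: dsum mem_Times_iff)
    moreover have "g1 (g2 (mat_unit n2 (fst t) (snd t))) $$ (x',y') = (\<Sum>v\<in>{..<m2}\<times>{..<m2}. ?G t v * ?Y v)"
      using lin_expand[OF g1 g2[of "fst t" "snd t"] xy(3,4)] t by (simp add: dsum mem_Times_iff)
    ultimately show "?\<alpha> s t * (\<Sum>u\<in>{..<m1}\<times>{..<m1}. ?F s u * ?X u) * (\<Sum>v\<in>{..<m2}\<times>{..<m2}. ?G t v * ?Y v) =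
      ?\<alpha> s t * f1 (f2 (mat_unit n1 (fst s) (snd s))) $$ (x,y) * g1 (g2 (mat_unit n2 (fst t) (snd t))) $$ (x',y')"
      by simp
  qed
  also have "\<dots> = tens_map n1 m1' (\<lambda>B. f1 (f2 B)) n2 m2' (\<lambda>B. g1 (g2 B)) A $$ (P,Q)"
    using A P Q by (simp add: tens_map_index dsum x_y_x'_y'_def)
  finally show "tens_map m1 m1' f1 m2 m2' g1 ?B $$ (P,Q) = tens_map n1 m1' (\<lambda>B. f1 (f2 B)) n2 m2' (\<lambda>B. g1 (g2 B)) A $$ (P,Q)" .
qed auto



lemma tens_map_cong:
  assumes "\<And>i j. i < n1 \<Longrightarrow> j < n1 \<Longrightarrow> f (mat_unit n1 i j) = f' (mat_unit n1 i j)"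
    and "\<And>i j. i < n2 \<Longrightarrow> j < n2 \<Longrightarrow> g (mat_unit n2 i j) = g' (mat_unit n2 i j)"
  shows "tens_map n1 m1 f n2 m2 g A = tens_map n1 m1 f' n2 m2 g' A"
  unfolding tens_map_def using assms by (auto intro!: sum.cong eq_matI)

lemma qopD:
  assumes "is_qop T"
  shows "0 < qin T" "0 < qout T" "lin (qin T) (qout T) (qmap T)"
    "\<And>A. A \<notin> carrier_mat (qin T) (qin T) \<Longrightarrow> qmap T A = 0\<^sub>m (qout T) (qout T)"
    "\<And>A. A \<in> carrier_mat (qin T) (qin T) \<Longrightarrow> qmap T A \<in> carrier_mat (qout T) (qout T)"
    "\<And>A. A \<in> carrier_mat (qin T) (qin T) \<Longrightarrow> mtrace (qout T) (qmap T A) = mtrace (qin T) A"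
    "\<And>k A. 0 < k \<Longrightarrow> psd (qin T * k) A \<Longrightarrow> psd (qout T * k) (tens_map (qin T) (qout T) (qmap T) k k (id_map k) A)"
  using assms unfolding is_qop_def lin_def Let_def by auto

lemma qopI:
  assumes "0 < qin T" "0 < qout T" "lin (qin T) (qout T) (qmap T)"
    "\<And>A. A \<notin> carrier_mat (qin T) (qin T) \<Longrightarrow> qmap T A = 0\<^sub>m (qout T) (qout T)"
    "\<And>A. A \<in> carrier_mat (qin T) (qin T) \<Longrightarrow> mtrace (qout T) (qmap T A) = mtrace (qin T) A"
    "\<And>k A. 0 < k \<Longrightarrow> psd (qin T * k) A \<Longrightarrow> psd (qout T * k) (tens_map (qin T) (qout T) (qmap T) k k (id_map k) A)"
  shows "is_qop T"
  using assms unfolding is_qop_def lin_def Let_def by auto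

lemma psd_carrier: "psd n A \<Longrightarrow> A \<in> carrier_mat n n"
  by (simp add: psd_def)

lemma psd_perm:
  assumes B: "psd N B" and bij: "bij_betw \<rho> {..<N} {..<N}"
  shows "psd N (mat N N (\<lambda>(P,Q). B $$ (\<rho> P, \<rho> Q)))"
  unfolding psd_def
proof (intro conjI allI)
  show "mat N N (\<lambda>(P,Q). B $$ (\<rho> P, \<rho> Q)) \<in> carrier_mat N N" by simp
  fix v :: "nat \<Rightarrow> complex"
  define w where "w = (\<lambda>i. v (inv_into {..<N} \<rho> i))"
  have inj: "inj_on \<rho> {..<N}" using bij bij_betw_def by blast
  have vw: "v i = w (\<rho> i)" if "i < N" for i
    unfolding w_def using inv_into_f_f[OF inj] that by simp
  have "(\<Sum>i<N. \<Sum>j<N. cnj (v i) * mat N N (\<lambda>(P,Q). B $$ (\<rho> P, \<rho> Q)) $$ (i,j) * v j) =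
        (\<Sum>i<N. \<Sum>j<N. cnj (w (\<rho> i)) * B $$ (\<rho> i, \<rho> j) * w (\<rho> j))"
    by (intro sum.cong refl) (simp add: vw)
  also have "\<dots> = (\<Sum>i<N. \<Sum>j<N. cnj (w i) * B $$ (i, j) * w j)"
    using sum.reindex_bij_betw[OF bij, of "\<lambda>i. \<Sum>j<N. cnj (w i) * B $$ (i, j) * w j"]
          sum.reindex_bij_betw[OF bij, of "\<lambda>j. cnj (w _) * B $$ (_, j) * w j"]
    by simp
  finally show "let z = \<Sum>i<N. \<Sum>j<N. cnj (v i) * mat N N (\<lambda>(P,Q). B $$ (\<rho> P, \<rho> Q)) $$ (i,j) * v j
         in Im z = 0 \<and> 0 \<le> Re z"
    using B unfolding psd_def Let_def by metis
qed

lemma lin_id: "lin k k (id_map k)"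
  unfolding lin_def id_map_def by auto

lemma tens_id_id:
  assumes "A \<in> carrier_mat (k*j) (k*j)"
  shows "tens_map k k (id_map k) j j (id_map j) A = A"
proof (rule eq_matI)
  fix P Q assume "P < dim_row A" "Q < dim_col A"
  then have P: "P < k*j" and Q: "Q < k*j" using assms by auto
  have j: "j > 0" using P by (cases j) auto
  have "tens_map k k (id_map k) j j (id_map j) A $$ (P,Q) =
    (\<Sum>i<k. \<Sum>i'<k. A $$ (i*j + P mod j, i'*j + Q mod j) * (if P div j = i \<and> Q div j = i' then 1 else 0))"
    using tens_id_right[OF assms P Q, of "id_map k"] P Q div_lt by (simp)
  also have "\<dots> = A $$ ((P div j)*j + P mod j, (Q div j)*j + Q mod j)"
    using div_lt[OF P] div_lt[OF Q]
    by (subst sum_single[where a="P div j"], simp, simp, simp, subst sum_single[where a="Q div j"], auto)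
  also have "\<dots> = A $$ (P,Q)" by simp
  finally show "tens_map k k (id_map k) j j (id_map j) A $$ (P,Q) = A $$ (P,Q)" .
qed (use assms in auto)

lemma is_qop_id: "0 < k \<Longrightarrow> is_qop (qid k)"
  apply (rule qopI)
  using lin_id[of k] tens_id_id psd_carrier
  by (auto simp: qid_def id_map_def)

lemma is_qop_comp:
  assumes F: "is_qop F" and T: "is_qop T" and d: "qin F = qout T"
  shows "is_qop (qcomp F T)"
proof (rule qopI)
  let ?n = "qin T" and ?m = "qout T" and ?m' = "qout F"
  have lF: "lin ?m ?m' (qmap F)" and lT: "lin ?n ?m (qmap T)" using qopD(3)[OF F] qopD(3)[OF T] d by auto
  show "0 < qin (qcomp F T)" "0 < qout (qcomp F T)" using qopD(1,2) F T by (auto simp: qcomp_def)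
  show "lin (qin (qcomp F T)) (qout (qcomp F T)) (qmap (qcomp F T))"
    using lF lT unfolding lin_def qcomp_def by auto
  show "A \<notin> carrier_mat (qin (qcomp F T)) (qin (qcomp F T)) \<Longrightarrow> qmap (qcomp F T) A = 0\<^sub>m (qout (qcomp F T)) (qout (qcomp F T))" for A
    by (simp add: qcomp_def)
  show "A \<in> carrier_mat (qin (qcomp F T)) (qin (qcomp F T)) \<Longrightarrow> mtrace (qout (qcomp F T)) (qmap (qcomp F T) A) = mtrace (qin (qcomp F T)) A" for A
    using qopD(5,6)[OF F] qopD(5,6)[OF T] d by (simp add: qcomp_def)
  fix k A assume k: "0 < k" and A: "psd (qin (qcomp F T) * k) A"
  then have Ac: "A \<in> carrier_mat (?n*k) (?n*k)" using psd_carrier by (simp add: qcomp_def)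
  have "tens_map ?m ?m' (qmap F) k k (id_map k) (tens_map ?n ?m (qmap T) k k (id_map k) A) =
        tens_map ?n ?m' (\<lambda>B. qmap F (qmap T B)) k k (\<lambda>B. id_map k (id_map k B)) A"
    by (rule tens_comp[OF lF lin_id _ _ Ac]) (use lT lin_carrier in auto)
  also have "\<dots> = tens_map (qin (qcomp F T)) (qout (qcomp F T)) (qmap (qcomp F T)) k k (id_map k) A"
    unfolding qcomp_def by (simp, rule tens_map_cong) auto
  finally have eq: "tens_map (qin (qcomp F T)) (qout (qcomp F T)) (qmap (qcomp F T)) k k (id_map k) A =
     tens_map ?m ?m' (qmap F) k k (id_map k) (tens_map ?n ?m (qmap T) k k (id_map k) A)" by simp
  have "psd (?m*k) (tens_map ?n ?m (qmap T) k k (id_map k) A)"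
    using qopD(7)[OF T k] A by (simp add: qcomp_def)
  then show "psd (qout (qcomp F T) * k) (tens_map (qin (qcomp F T)) (qout (qcomp F T)) (qmap (qcomp F T)) k k (id_map k) A)"
    unfolding eq using qopD(7)[OF F k] d by (simp add: qcomp_def)
qed



lemma tens_map_lin: "lin (n1*n2) (m1*m2) (tens_map n1 m1 f n2 m2 g)"
  unfolding lin_def
proof (intro conjI ballI allI)
  fix A B :: "complex mat" and c :: complex
  assume A: "A \<in> carrier_mat (n1*n2) (n1*n2)" and B: "B \<in> carrier_mat (n1*n2) (n1*n2)"
  show "tens_map n1 m1 f n2 m2 g (c \<cdot>\<^sub>m A + B) = c \<cdot>\<^sub>m tens_map n1 m1 f n2 m2 g A + tens_map n1 m1 f n2 m2 g B"
  proof (rule eq_matI)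
    fix P Q assume "P < dim_row (c \<cdot>\<^sub>m tens_map n1 m1 f n2 m2 g A + tens_map n1 m1 f n2 m2 g B)"
      "Q < dim_col (c \<cdot>\<^sub>m tens_map n1 m1 f n2 m2 g A + tens_map n1 m1 f n2 m2 g B)"
    then have P: "P < m1*m2" and Q: "Q < m1*m2" by auto
    have idx: "i*n2+k < n1*n2" if "i < n1" "k < n2" for i k using lt_mult_add that by auto
    show "tens_map n1 m1 f n2 m2 g (c \<cdot>\<^sub>m A + B) $$ (P,Q) = (c \<cdot>\<^sub>m tens_map n1 m1 f n2 m2 g A + tens_map n1 m1 f n2 m2 g B) $$ (P,Q)"
      using A B P Q idx
      by (simp add: tens_map_index sum_distrib_left sum.distrib[symmetric] ring_distribs mult_ac)
  qed auto
qed simp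

lemma add_mult_eq_iff: "r < (k::nat) \<Longrightarrow> c < k \<Longrightarrow> (a*k + r = a'*k + c) \<longleftrightarrow> (a = a' \<and> r = c)"
  by (metis divmod_simps)

lemma collapse2:
  fixes h :: "nat \<Rightarrow> nat \<Rightarrow> 'a::comm_ring_1"
  assumes "a < k" "b < k"
  shows "(\<Sum>c<k. \<Sum>d<k. h c d * (if a = c \<and> b = d then F else 0)) = h a b * F"
  using assms by (subst sum_single[where a=a], simp, simp, simp, subst sum_single[where a=b], auto)

lemma tens_id_right_unit:
  assumes "a' < n" "c < k" "b' < n" "d < k" "x < m*k" "y < m*k"
  shows "tens_map n m f k k (id_map k) (mat_unit (n*k) (a'*k+c) (b'*k+d)) $$ (x,y) =
    (if x mod k = c \<and> y mod k = d then f (mat_unit n a' b') $$ (x div k, y div k) else 0)"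
proof -
  have xk: "x mod k < k" "y mod k < k" using assms mod_lt by auto
  have "tens_map n m f k k (id_map k) (mat_unit (n*k) (a'*k+c) (b'*k+d)) $$ (x,y) =
    (\<Sum>a<n. \<Sum>b<n. mat_unit (n*k) (a'*k+c) (b'*k+d) $$ (a*k + x mod k, b*k + y mod k) * f (mat_unit n a b) $$ (x div k, y div k))"
    using tens_id_right[OF _ assms(5,6)] by simp
  also have "\<dots> = (\<Sum>a<n. \<Sum>b<n. (if a = a' \<and> x mod k = c \<and> b = b' \<and> y mod k = d then 1 else 0) * f (mat_unit n a b) $$ (x div k, y div k))"
  proof (intro sum.cong refl)
    fix a b assume ab: "a \<in> {..<n}" "b \<in> {..<n}"
    have "a*k + x mod k < n*k" "b*k + y mod k < n*k" using lt_mult_add ab xk by auto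
    then show "mat_unit (n*k) (a'*k+c) (b'*k+d) $$ (a*k + x mod k, b*k + y mod k) * f (mat_unit n a b) $$ (x div k, y div k) =
      (if a = a' \<and> x mod k = c \<and> b = b' \<and> y mod k = d then 1 else 0) * f (mat_unit n a b) $$ (x div k, y div k)"
      using xk assms by (simp add: add_mult_eq_iff)
  qed
  also have "\<dots> = (if x mod k = c \<and> y mod k = d then f (mat_unit n a' b') $$ (x div k, y div k) else 0)"
    using assms by (subst sum_single[where a=a'], simp, simp, simp, subst sum_single[where a=b'], auto)
  finally show ?thesis .
qed

lemma tens_assoc_id:
  assumes A: "A \<in> carrier_mat (n*k*j) (n*k*j)"
  shows "tens_map (n*k) (m*k) (tens_map n m f k k (id_map k)) j j (id_map j) A = tens_map n m f (k*j) (k*j) (id_map (k*j)) A"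
proof (rule eq_matI)
  fix P Q assume "P < dim_row (tens_map n m f (k*j) (k*j) (id_map (k*j)) A)" "Q < dim_col (tens_map n m f (k*j) (k*j) (id_map (k*j)) A)"
  then have P: "P < m*k*j" and Q: "Q < m*k*j" by (auto simp: mult.assoc)
  define x y where "x = P div j" "y = Q div j"
  have xy: "x < m*k" "y < m*k" using P Q div_lt unfolding x_y_def by auto
  have kpos: "k > 0" using xy by (cases k) auto
  have "tens_map (n*k) (m*k) (tens_map n m f k k (id_map k)) j j (id_map j) A $$ (P,Q) =
    (\<Sum>I<n*k. \<Sum>J<n*k. A $$ (I*j + P mod j, J*j + Q mod j) * tens_map n m f k k (id_map k) (mat_unit (n*k) I J) $$ (x, y))"
    using tens_id_right[OF A P Q] unfolding x_y_def by simp
  also have "\<dots> = (\<Sum>a<n. \<Sum>c<k. \<Sum>b<n. \<Sum>d<k. A $$ ((a*k+c)*j + P mod j, (b*k+d)*j + Q mod j) *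
       tens_map n m f k k (id_map k) (mat_unit (n*k) (a*k+c) (b*k+d)) $$ (x, y))"
    by (simp add: sum_split_mult)
  also have "\<dots> = (\<Sum>a<n. \<Sum>c<k. \<Sum>b<n. \<Sum>d<k. A $$ ((a*k+c)*j + P mod j, (b*k+d)*j + Q mod j) *
       (if x mod k = c \<and> y mod k = d then f (mat_unit n a b) $$ (x div k, y div k) else 0))"
    using xy by (intro sum.cong refl) (simp add: tens_id_right_unit)
  also have "\<dots> = (\<Sum>a<n. \<Sum>b<n. \<Sum>c<k. \<Sum>d<k. A $$ ((a*k+c)*j + P mod j, (b*k+d)*j + Q mod j) *
       (if x mod k = c \<and> y mod k = d then f (mat_unit n a b) $$ (x div k, y div k) else 0))"
    by (rule sum.cong[OF refl], rule sum.swap)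
  also have "\<dots> = (\<Sum>a<n. \<Sum>b<n. A $$ ((a*k + x mod k)*j + P mod j, (b*k + y mod k)*j + Q mod j) *
       f (mat_unit n a b) $$ (x div k, y div k))"
    using kpos by (intro sum.cong refl, subst collapse2[where h="\<lambda>c d. A $$ ((_*k+c)*j + P mod j, (_*k+d)*j + Q mod j)"]) auto
  also have "\<dots> = (\<Sum>a<n. \<Sum>b<n. A $$ (a*(k*j) + P mod (k*j), b*(k*j) + Q mod (k*j)) *
       f (mat_unit n a b) $$ (P div (k*j), Q div (k*j)))"
  proof -
    have e1: "(a*k + x mod k)*j + P mod j = a*(k*j) + P mod (k*j)" for a
      unfolding x_y_def by (simp add: mod_mult2_eq[of P j k] mult.commute[of k j] algebra_simps)
    have e2: "(b*k + y mod k)*j + Q mod j = b*(k*j) + Q mod (k*j)" for b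
      unfolding x_y_def by (simp add: mod_mult2_eq[of Q j k] mult.commute[of k j] algebra_simps)
    have e3: "x div k = P div (k*j)" "y div k = Q div (k*j)"
      unfolding x_y_def by (simp_all add: div_mult2_eq mult.commute[of k j])
    show ?thesis by (simp add: e1 e2 e3)
  qed
  also have "\<dots> = tens_map n m f (k*j) (k*j) (id_map (k*j)) A $$ (P,Q)"
    using tens_id_right[of A n "k*j" P m Q f] A P Q by (simp add: mult.assoc)
  finally show "tens_map (n*k) (m*k) (tens_map n m f k k (id_map k)) j j (id_map j) A $$ (P,Q) =
     tens_map n m f (k*j) (k*j) (id_map (k*j)) A $$ (P,Q)" .
qed (auto simp: mult.assoc)



lemma mtrace_unit: "a < n \<Longrightarrow> b < n \<Longrightarrow> mtrace n (mat_unit n a b) = (if a = b then 1 else 0)"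
  unfolding mtrace_def by (cases "a = b") (auto simp: sum_single[where a=a])

lemma tens_id_right_trace:
  assumes f: "lin n m f" and tr: "\<And>A. A \<in> carrier_mat n n \<Longrightarrow> mtrace m (f A) = mtrace n A"
    and A: "A \<in> carrier_mat (n*k) (n*k)"
  shows "mtrace (m*k) (tens_map n m f k k (id_map k) A) = mtrace (n*k) A"
proof -
  have "mtrace (m*k) (tens_map n m f k k (id_map k) A) = (\<Sum>x<m. \<Sum>c<k. tens_map n m f k k (id_map k) A $$ (x*k+c, x*k+c))"
    unfolding mtrace_def by (rule sum_split_mult)
  also have "\<dots> = (\<Sum>x<m. \<Sum>c<k. \<Sum>a<n. \<Sum>b<n. A $$ (a*k + c, b*k + c) * f (mat_unit n a b) $$ (x, x))"
  proof (intro sum.cong refl)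
    fix x c assume "x \<in> {..<m}" "c \<in> {..<k}"
    then have "x*k+c < m*k" using lt_mult_add by auto
    then show "tens_map n m f k k (id_map k) A $$ (x*k+c, x*k+c) = (\<Sum>a<n. \<Sum>b<n. A $$ (a*k + c, b*k + c) * f (mat_unit n a b) $$ (x, x))"
      using tens_id_right[OF A] \<open>c \<in> {..<k}\<close> by simp
  qed
  also have "\<dots> = (\<Sum>c<k. \<Sum>x<m. \<Sum>a<n. \<Sum>b<n. A $$ (a*k + c, b*k + c) * f (mat_unit n a b) $$ (x, x))"
    by (rule sum.swap)
  also have "\<dots> = (\<Sum>c<k. \<Sum>a<n. \<Sum>x<m. \<Sum>b<n. A $$ (a*k + c, b*k + c) * f (mat_unit n a b) $$ (x, x))"
    by (rule sum.cong[OF refl], rule sum.swap)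
  also have "\<dots> = (\<Sum>c<k. \<Sum>a<n. \<Sum>b<n. \<Sum>x<m. A $$ (a*k + c, b*k + c) * f (mat_unit n a b) $$ (x, x))"
    by (rule sum.cong[OF refl], rule sum.cong[OF refl], rule sum.swap)
  also have "\<dots> = (\<Sum>c<k. \<Sum>a<n. \<Sum>b<n. A $$ (a*k + c, b*k + c) * mtrace m (f (mat_unit n a b)))"
    by (simp add: mtrace_def sum_distrib_left)
  also have "\<dots> = (\<Sum>c<k. \<Sum>a<n. \<Sum>b<n. A $$ (a*k + c, b*k + c) * (if a = b then 1 else 0))"
    by (intro sum.cong refl) (simp add: tr mtrace_unit)
  also have "\<dots> = (\<Sum>c<k. \<Sum>a<n. A $$ (a*k + c, a*k + c))"
    by (intro sum.cong refl) (subst sum_single, auto)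
  also have "\<dots> = (\<Sum>a<n. \<Sum>c<k. A $$ (a*k + c, a*k + c))"
    by (rule sum.swap)
  also have "\<dots> = mtrace (n*k) A"
    unfolding mtrace_def by (rule sum_split_mult[symmetric])
  finally show ?thesis .
qed

lemma qtens_id_simps: "qin (qtens T (qid k)) = qin T * k" "qout (qtens T (qid k)) = qout T * k"
  "qmap (qtens T (qid k)) = tens_map (qin T) (qout T) (qmap T) k k (id_map k)"
  by (simp_all add: qtens_def qid_def)

lemma is_qop_tens_id:
  assumes T: "is_qop T" and k: "0 < k"
  shows "is_qop (qtens T (qid k))"
proof (rule qopI, unfold qtens_id_simps)
  show "0 < qin T * k" "0 < qout T * k" using qopD(1,2)[OF T] k by auto
  show "lin (qin T * k) (qout T * k) (tens_map (qin T) (qout T) (qmap T) k k (id_map k))" by (rule tens_map_lin)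
  show "A \<notin> carrier_mat (qin T * k) (qin T * k) \<Longrightarrow> tens_map (qin T) (qout T) (qmap T) k k (id_map k) A = 0\<^sub>m (qout T * k) (qout T * k)" for A
    by (rule tens_map_out)
  show "A \<in> carrier_mat (qin T * k) (qin T * k) \<Longrightarrow> mtrace (qout T * k) (tens_map (qin T) (qout T) (qmap T) k k (id_map k) A) = mtrace (qin T * k) A" for A
    by (rule tens_id_right_trace[OF qopD(3,6)[OF T]])
  fix j A assume j: "0 < j" and A: "psd (qin T * k * j) A"
  have "tens_map (qin T * k) (qout T * k) (tens_map (qin T) (qout T) (qmap T) k k (id_map k)) j j (id_map j) A =
     tens_map (qin T) (qout T) (qmap T) (k*j) (k*j) (id_map (k*j)) A"
    by (rule tens_assoc_id) (use A psd_carrier in auto)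
  moreover have "psd (qout T * (k*j)) (tens_map (qin T) (qout T) (qmap T) (k*j) (k*j) (id_map (k*j)) A)"
    using qopD(7)[OF T, of "k*j" A] A j k by (simp add: mult.assoc)
  ultimately show "psd (qout T * k * j) (tens_map (qin T * k) (qout T * k) (tens_map (qin T) (qout T) (qmap T) k k (id_map k)) j j (id_map j) A)"
    by (simp add: mult.assoc)
qed



definition sw :: "nat \<Rightarrow> nat \<Rightarrow> nat \<Rightarrow> nat" where
  "sw a b P = (P mod a) * b + P div a"

definition qswap :: "nat \<Rightarrow> nat \<Rightarrow> qop" where
  "qswap a b = \<lparr> qin = a*b, qout = b*a,
     qmap = (\<lambda>A. if A \<in> carrier_mat (a*b) (a*b) then mat (b*a) (b*a) (\<lambda>(P,Q). A $$ (sw a b P, sw a b Q))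
                 else 0\<^sub>m (b*a) (b*a)) \<rparr>"

lemma sw_lt: "P < b*a \<Longrightarrow> sw a b P < a*b"
  unfolding sw_def using lt_mult_add[of "P mod a" a "P div a" b] div_lt[of P b a] mod_lt[of P b a] by auto

lemma sw_inv: "P < b*a \<Longrightarrow> sw b a (sw a b P) = P"
proof -
  assume P: "P < b*a"
  have "P div a < b" using div_lt P by auto
  then show ?thesis unfolding sw_def by (simp add: add.commute)
qed

lemma sw_bij: "bij_betw (sw a b) {..<b*a} {..<a*b}"
  by (rule bij_betw_byWitness[where f'="sw b a"]) (auto simp: sw_inv sw_lt)

lemma sw_inj: "P < b*a \<Longrightarrow> Q < b*a \<Longrightarrow> sw a b P = sw a b Q \<Longrightarrow> P = Q"
  by (metis sw_inv)

lemma sw_low[simp]: "r < a \<Longrightarrow> K < b \<Longrightarrow> sw a b (K*a + r) = r*b + K"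
  unfolding sw_def by simp

lemma qswap_simps: "qin (qswap a b) = a*b" "qout (qswap a b) = b*a"
  by (simp_all add: qswap_def)

lemma swap_unit:
  assumes "I < a*b" "J < a*b" "x < b*a" "y < b*a"
  shows "qmap (qswap a b) (mat_unit (a*b) I J) $$ (x,y) = (if sw a b x = I \<and> sw a b y = J then 1 else 0)"
  using assms sw_lt[of x b a] sw_lt[of y b a] by (auto simp: qswap_def)

lemma tens_swap:
  assumes A: "A \<in> carrier_mat (a*b*j) (a*b*j)" and P: "P < b*a*j" and Q: "Q < b*a*j"
  shows "tens_map (a*b) (b*a) (qmap (qswap a b)) j j (id_map j) A $$ (P,Q) =
         A $$ (sw a b (P div j) * j + P mod j, sw a b (Q div j) * j + Q mod j)"
proof -
  have x: "P div j < b*a" "Q div j < b*a" using P Q div_lt by auto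
  have "tens_map (a*b) (b*a) (qmap (qswap a b)) j j (id_map j) A $$ (P,Q) =
    (\<Sum>I<a*b. \<Sum>J<a*b. A $$ (I*j + P mod j, J*j + Q mod j) * (if sw a b (P div j) = I \<and> sw a b (Q div j) = J then 1 else 0))"
    using tens_id_right[OF A P Q] x by (simp add: swap_unit)
  also have "\<dots> = A $$ (sw a b (P div j) * j + P mod j, sw a b (Q div j) * j + Q mod j)"
    using sw_lt[OF x(1)] sw_lt[OF x(2)]
    by (subst sum_single[where a="sw a b (P div j)"], simp, simp, simp, subst sum_single[where a="sw a b (Q div j)"], auto)
  finally show ?thesis .
qed

definition swj :: "nat \<Rightarrow> nat \<Rightarrow> nat \<Rightarrow> nat \<Rightarrow> nat" where
  "swj a b j P = sw a b (P div j) * j + P mod j"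

lemma swj_lt: "P < b*a*j \<Longrightarrow> swj a b j P < a*b*j"
  unfolding swj_def using lt_mult_add[of "sw a b (P div j)" "a*b" "P mod j" j] sw_lt[of "P div j" b a] div_lt[of P "b*a" j] mod_lt[of P "b*a" j]
  by auto

lemma swj_inv: "P < b*a*j \<Longrightarrow> swj b a j (swj a b j P) = P"
proof -
  assume P: "P < b*a*j"
  have "P mod j < j" using mod_lt P by auto
  moreover have "P div j < b*a" using div_lt P by auto
  ultimately show ?thesis unfolding swj_def by (simp add: sw_inv)
qed

lemma swj_bij: "bij_betw (swj a b j) {..<a*b*j} {..<a*b*j}"
proof -
  have "bij_betw (swj a b j) {..<b*a*j} {..<a*b*j}"
    by (rule bij_betw_byWitness[where f'="swj b a j"]) (auto simp: swj_inv swj_lt)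
  then show ?thesis by (simp add: mult.commute)
qed

lemma lin_swap: "lin (a*b) (b*a) (qmap (qswap a b))"
  unfolding lin_def qswap_def using sw_lt by (auto intro!: eq_matI)

lemma is_qop_swap:
  assumes a: "0 < a" and b: "0 < b"
  shows "is_qop (qswap a b)"
proof (rule qopI, unfold qswap_simps)
  show "0 < a*b" "0 < b*a" using a b by auto
  show "lin (a*b) (b*a) (qmap (qswap a b))" by (rule lin_swap)
  show "A \<notin> carrier_mat (a*b) (a*b) \<Longrightarrow> qmap (qswap a b) A = 0\<^sub>m (b*a) (b*a)" for A
    by (simp add: qswap_def)
  show "A \<in> carrier_mat (a*b) (a*b) \<Longrightarrow> mtrace (b*a) (qmap (qswap a b) A) = mtrace (a*b) A" for A
    unfolding mtrace_def qswap_def using sw_lt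
    by (simp add: sum.reindex_bij_betw[OF sw_bij, of "\<lambda>P. A $$ (P,P)"])
  fix j A assume j: "0 < j" and A: "psd (a*b*j) A"
  have Ac: "A \<in> carrier_mat (a*b*j) (a*b*j)" using A psd_carrier by auto
  have "tens_map (a*b) (b*a) (qmap (qswap a b)) j j (id_map j) A = mat (a*b*j) (a*b*j) (\<lambda>(P,Q). A $$ (swj a b j P, swj a b j Q))"
    by (rule eq_matI) (use Ac tens_swap[OF Ac] in \<open>auto simp: swj_def mult.commute[of b a]\<close>)
  moreover have "psd (a*b*j) (mat (a*b*j) (a*b*j) (\<lambda>(P,Q). A $$ (swj a b j P, swj a b j Q)))"
    by (rule psd_perm[OF A swj_bij])
  ultimately show "psd (b*a*j) (tens_map (a*b) (b*a) (qmap (qswap a b)) j j (id_map j) A)"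
    by (simp add: mult.commute[of b a])
qed



lemma qtens_decomp:
  assumes T: "is_qop T" and F: "is_qop F"
  shows "qtens T F = qcomp (qtens (qid (qout T)) F) (qtens T (qid (qin F)))"
proof -
  let ?n1 = "qin T" and ?m1 = "qout T" and ?n2 = "qin F" and ?m2 = "qout F"
  have key: "tens_map ?n1 ?m1 (qmap T) ?n2 ?m2 (qmap F) A =
     tens_map ?m1 ?m1 (id_map ?m1) ?n2 ?m2 (qmap F) (tens_map ?n1 ?m1 (qmap T) ?n2 ?n2 (id_map ?n2) A)"
    if A: "A \<in> carrier_mat (?n1 * ?n2) (?n1 * ?n2)" for A
  proof -
    have "tens_map ?m1 ?m1 (id_map ?m1) ?n2 ?m2 (qmap F) (tens_map ?n1 ?m1 (qmap T) ?n2 ?n2 (id_map ?n2) A) =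
      tens_map ?n1 ?m1 (\<lambda>B. id_map ?m1 (qmap T B)) ?n2 ?m2 (\<lambda>B. qmap F (id_map ?n2 B)) A"
      by (rule tens_comp[OF lin_id qopD(3)[OF F] _ _ A]) (use qopD(5)[OF T] in auto)
    also have "\<dots> = tens_map ?n1 ?m1 (qmap T) ?n2 ?m2 (qmap F) A"
      by (rule tens_map_cong) (use qopD(5)[OF T] in \<open>auto simp: id_map_def\<close>)
    finally show ?thesis by simp
  qed
  show ?thesis
    unfolding qtens_def qcomp_def qid_def using key by (auto simp: tens_map_out fun_eq_iff)
qed

lemma qtens_left_id:
  assumes F: "is_qop F" and n: "0 < n"
  shows "qtens (qid n) F = qcomp (qswap (qout F) n) (qcomp (qtens F (qid n)) (qswap n (qin F)))"
proof -
  let ?n2 = "qin F" and ?m = "qout F"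
  have key: "tens_map n n (id_map n) ?n2 ?m (qmap F) A =
     mat (n*?m) (n*?m) (\<lambda>(P,Q). tens_map ?n2 ?m (qmap F) n n (id_map n) (qmap (qswap n ?n2) A) $$ (sw ?m n P, sw ?m n Q))"
    if A: "A \<in> carrier_mat (n * ?n2) (n * ?n2)" for A
  proof (rule eq_matI)
    fix P Q assume "P < dim_row (mat (n*?m) (n*?m) (\<lambda>(P,Q). tens_map ?n2 ?m (qmap F) n n (id_map n) (qmap (qswap n ?n2) A) $$ (sw ?m n P, sw ?m n Q)))"
      "Q < dim_col (mat (n*?m) (n*?m) (\<lambda>(P,Q). tens_map ?n2 ?m (qmap F) n n (id_map n) (qmap (qswap n ?n2) A) $$ (sw ?m n P, sw ?m n Q)))"
    then have P: "P < n*?m" and Q: "Q < n*?m" by auto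
    have pm: "P div ?m < n" "Q div ?m < n" using P Q div_lt by auto
    have A': "qmap (qswap n ?n2) A \<in> carrier_mat (?n2*n) (?n2*n)"
      using A by (simp add: qswap_def)
    have R: "sw ?m n P < ?m*n" "sw ?m n Q < ?m*n" using sw_lt P Q by auto
    have Rm: "sw ?m n P mod n = P div ?m" "sw ?m n P div n = P mod ?m"
       "sw ?m n Q mod n = Q div ?m" "sw ?m n Q div n = Q mod ?m"
      using pm by (simp_all add: sw_def)
    have "tens_map ?n2 ?m (qmap F) n n (id_map n) (qmap (qswap n ?n2) A) $$ (sw ?m n P, sw ?m n Q) =
      (\<Sum>K<?n2. \<Sum>L<?n2. qmap (qswap n ?n2) A $$ (K*n + P div ?m, L*n + Q div ?m) * qmap F (mat_unit ?n2 K L) $$ (P mod ?m, Q mod ?m))"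
      using tens_id_right[OF A' R] by (simp add: Rm)
    also have "\<dots> = (\<Sum>K<?n2. \<Sum>L<?n2. A $$ ((P div ?m)*?n2 + K, (Q div ?m)*?n2 + L) * qmap F (mat_unit ?n2 K L) $$ (P mod ?m, Q mod ?m))"
    proof (intro sum.cong refl)
      fix K L assume "K \<in> {..<?n2}" "L \<in> {..<?n2}"
      then have "K*n + P div ?m < ?n2*n" "L*n + Q div ?m < ?n2*n" using lt_mult_add pm by auto
      then show "qmap (qswap n ?n2) A $$ (K*n + P div ?m, L*n + Q div ?m) * qmap F (mat_unit ?n2 K L) $$ (P mod ?m, Q mod ?m) =
         A $$ ((P div ?m)*?n2 + K, (Q div ?m)*?n2 + L) * qmap F (mat_unit ?n2 K L) $$ (P mod ?m, Q mod ?m)"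
        using A pm \<open>K \<in> {..<?n2}\<close> \<open>L \<in> {..<?n2}\<close> by (simp add: qswap_def)
    qed
    also have "\<dots> = tens_map n n (id_map n) ?n2 ?m (qmap F) A $$ (P,Q)"
      using tens_id_left[OF A P Q] by simp
    finally show "tens_map n n (id_map n) ?n2 ?m (qmap F) A $$ (P,Q) =
      mat (n*?m) (n*?m) (\<lambda>(P,Q). tens_map ?n2 ?m (qmap F) n n (id_map n) (qmap (qswap n ?n2) A) $$ (sw ?m n P, sw ?m n Q)) $$ (P,Q)"
      using P Q by simp
  qed auto
  show ?thesis
    unfolding qtens_def qcomp_def qid_def
    using key by (auto simp: tens_map_out fun_eq_iff qswap_def)
qed

lemma is_qop_tens:
  assumes T: "is_qop T" and F: "is_qop F"
  shows "is_qop (qtens T F)"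
proof -
  have p: "0 < qin T" "0 < qout T" "0 < qin F" "0 < qout F" using qopD(1,2) T F by auto
  have "is_qop (qtens (qid (qout T)) F)"
    unfolding qtens_left_id[OF F p(2)]
    by (intro is_qop_comp is_qop_swap is_qop_tens_id F p) (simp_all add: qswap_simps qtens_id_simps qcomp_def)
  then show ?thesis
    unfolding qtens_decomp[OF T F]
    by (intro is_qop_comp is_qop_tens_id T p) (simp_all add: qtens_def qid_def)
qed



lemma deph_carrier[simp]: "deph n A \<in> carrier_mat n n"
  by (simp add: deph_def)

lemma deph_dim[simp]: "dim_row (deph n A) = n" "dim_col (deph n A) = n"
  by (simp_all add: deph_def)

lemma deph_index[simp]: "x < n \<Longrightarrow> y < n \<Longrightarrow> deph n A $$ (x,y) = (if x = y then A $$ (x,y) else 0)"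
  by (simp add: deph_def)

lemma deph_idem[simp]: "deph n (deph n A) = deph n A"
  by (rule eq_matI) (auto simp: deph_def)

lemma deph_unit: "deph n (mat_unit n i j) = (if i = j then mat_unit n i j else 0\<^sub>m n n)"
  by (rule eq_matI) (auto simp: deph_def mat_unit_def)

lemma free_alt: "free X T \<longleftrightarrow> is_qop T \<and>
   (X = DI \<longrightarrow> (\<forall>A\<in>carrier_mat (qin T) (qin T). deph (qout T) (qmap T A) = deph (qout T) (qmap T (deph (qin T) A)))) \<and>
   (X = CI \<longrightarrow> (\<forall>A\<in>carrier_mat (qin T) (qin T). qmap T (deph (qin T) A) = deph (qout T) (qmap T (deph (qin T) A)))) \<and>
   (X = DCI \<longrightarrow> (\<forall>A\<in>carrier_mat (qin T) (qin T). deph (qout T) (qmap T A) = qmap T (deph (qin T) A)))"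
  by (cases X) (simp_all add: free_def Let_def)

lemma freeD:
  assumes "free X T"
  shows "is_qop T"
    "X = DI \<Longrightarrow> A \<in> carrier_mat (qin T) (qin T) \<Longrightarrow> deph (qout T) (qmap T A) = deph (qout T) (qmap T (deph (qin T) A))"
    "X = CI \<Longrightarrow> A \<in> carrier_mat (qin T) (qin T) \<Longrightarrow> qmap T (deph (qin T) A) = deph (qout T) (qmap T (deph (qin T) A))"
    "X = DCI \<Longrightarrow> A \<in> carrier_mat (qin T) (qin T) \<Longrightarrow> deph (qout T) (qmap T A) = qmap T (deph (qin T) A)"
  using assms unfolding free_alt by blast+

lemma freeI:
  assumes "is_qop T"
    "X = DI \<Longrightarrow> (\<And>A. A \<in> carrier_mat (qin T) (qin T) \<Longrightarrow> deph (qout T) (qmap T A) = deph (qout T) (qmap T (deph (qin T) A)))"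
    "X = CI \<Longrightarrow> (\<And>A. A \<in> carrier_mat (qin T) (qin T) \<Longrightarrow> qmap T (deph (qin T) A) = deph (qout T) (qmap T (deph (qin T) A)))"
    "X = DCI \<Longrightarrow> (\<And>A. A \<in> carrier_mat (qin T) (qin T) \<Longrightarrow> deph (qout T) (qmap T A) = qmap T (deph (qin T) A))"
  shows "free X T"
  unfolding free_alt using assms by blast

lemma free_DCI_all:
  assumes "free DCI T" shows "free X T"
proof (rule freeI)
  show "is_qop T" using freeD(1)[OF assms] .
  fix A :: "complex mat" assume A: "A \<in> carrier_mat (qin T) (qin T)"
  have e: "deph (qout T) (qmap T A) = qmap T (deph (qin T) A)" using freeD(4)[OF assms refl A] .
  show "deph (qout T) (qmap T A) = deph (qout T) (qmap T (deph (qin T) A))" by (simp flip: e)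
  show "qmap T (deph (qin T) A) = deph (qout T) (qmap T (deph (qin T) A))" by (simp flip: e)
  show "deph (qout T) (qmap T A) = qmap T (deph (qin T) A)" by (rule e)
qed

lemma free_id: assumes "0 < k" shows "free X (qid k)"
proof (rule free_DCI_all, rule freeI)
  show "is_qop (qid k)" using is_qop_id assms by auto
qed (auto simp: qid_def id_map_def)

lemma free_swap:
  assumes "0 < a" "0 < b" shows "free X (qswap a b)"
proof (rule free_DCI_all, rule freeI)
  show "is_qop (qswap a b)" using is_qop_swap assms by auto
  fix A :: "complex mat" assume A: "A \<in> carrier_mat (qin (qswap a b)) (qin (qswap a b))"
  show "deph (qout (qswap a b)) (qmap (qswap a b) A) = qmap (qswap a b) (deph (qin (qswap a b)) A)"
    using A sw_lt sw_inj by (auto simp: qswap_def deph_def intro!: eq_matI)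
qed simp_all


lemma tens_deph_out:
  assumes f: "\<And>i j. i < n1 \<Longrightarrow> j < n1 \<Longrightarrow> f (mat_unit n1 i j) \<in> carrier_mat m1 m1"
    and g: "\<And>i j. i < n2 \<Longrightarrow> j < n2 \<Longrightarrow> g (mat_unit n2 i j) \<in> carrier_mat m2 m2"
  shows "deph (m1*m2) (tens_map n1 m1 f n2 m2 g A) = tens_map n1 m1 (\<lambda>B. deph m1 (f B)) n2 m2 (\<lambda>B. deph m2 (g B)) A"
proof (cases "A \<in> carrier_mat (n1*n2) (n1*n2)")
  case False then show ?thesis by (simp add: tens_map_out) (rule eq_matI, auto simp: deph_def)
next
  case A: True
  show ?thesis
  proof (rule eq_matI)
    fix P Q assume "P < dim_row (tens_map n1 m1 (\<lambda>B. deph m1 (f B)) n2 m2 (\<lambda>B. deph m2 (g B)) A)"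
      "Q < dim_col (tens_map n1 m1 (\<lambda>B. deph m1 (f B)) n2 m2 (\<lambda>B. deph m2 (g B)) A)"
    then have P: "P < m1*m2" and Q: "Q < m1*m2" by auto
    have lt: "P div m2 < m1" "Q div m2 < m1" "P mod m2 < m2" "Q mod m2 < m2" using P Q div_lt mod_lt by auto
    have eq: "P = Q \<longleftrightarrow> P div m2 = Q div m2 \<and> P mod m2 = Q mod m2" by (metis div_mult_mod_eq)
    show "deph (m1*m2) (tens_map n1 m1 f n2 m2 g A) $$ (P,Q) = tens_map n1 m1 (\<lambda>B. deph m1 (f B)) n2 m2 (\<lambda>B. deph m2 (g B)) A $$ (P,Q)"
    proof (cases "P = Q")
      case True
      then show ?thesis using P Q A lt f g by (simp add: tens_map_index)
    next
      case False
      then have ne: "P div m2 \<noteq> Q div m2 \<or> P mod m2 \<noteq> Q mod m2" using eq by blast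
      have "tens_map n1 m1 (\<lambda>B. deph m1 (f B)) n2 m2 (\<lambda>B. deph m2 (g B)) A $$ (P,Q) = 0"
        unfolding tens_map_index[OF A P Q]
        by (intro sum.neutral ballI) (use ne lt f g in auto)
      then show ?thesis using False P Q by simp
    qed
  qed auto
qed

lemma tens_deph_in:
  assumes f: "lin n1 m1 f" and g: "lin n2 m2 g" and A: "A \<in> carrier_mat (n1*n2) (n1*n2)"
  shows "tens_map n1 m1 f n2 m2 g (deph (n1*n2) A) = tens_map n1 m1 (\<lambda>B. f (deph n1 B)) n2 m2 (\<lambda>B. g (deph n2 B)) A"
proof (rule eq_matI)
  fix P Q assume "P < dim_row (tens_map n1 m1 (\<lambda>B. f (deph n1 B)) n2 m2 (\<lambda>B. g (deph n2 B)) A)"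
      "Q < dim_col (tens_map n1 m1 (\<lambda>B. f (deph n1 B)) n2 m2 (\<lambda>B. g (deph n2 B)) A)"
  then have P: "P < m1*m2" and Q: "Q < m1*m2" by auto
  have lt: "P div m2 < m1" "Q div m2 < m1" "P mod m2 < m2" "Q mod m2 < m2" using P Q div_lt mod_lt by auto
  show "tens_map n1 m1 f n2 m2 g (deph (n1*n2) A) $$ (P,Q) = tens_map n1 m1 (\<lambda>B. f (deph n1 B)) n2 m2 (\<lambda>B. g (deph n2 B)) A $$ (P,Q)"
    using P Q A lt
    by (simp add: tens_map_index deph_unit lin_zero[OF f] lin_zero[OF g] lt_mult_add add_mult_eq_iff,
        intro sum.cong refl, auto simp: lin_zero[OF f] lin_zero[OF g])
qed auto



lemma free_tens:
  assumes F: "free X F" and G: "free X G"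
  shows "free X (qtens F G)"
proof (rule freeI)
  have qF: "is_qop F" and qG: "is_qop G" using freeD(1) F G by auto
  show "is_qop (qtens F G)" using is_qop_tens qF qG by auto
  let ?n1 = "qin F" and ?m1 = "qout F" and ?n2 = "qin G" and ?m2 = "qout G"
  let ?f = "qmap F" and ?g = "qmap G"
  have lf: "lin ?n1 ?m1 ?f" and lg: "lin ?n2 ?m2 ?g" using qopD(3) qF qG by auto
  have cf: "\<And>i j. ?f (mat_unit ?n1 i j) \<in> carrier_mat ?m1 ?m1" "\<And>i j. ?f (deph ?n1 (mat_unit ?n1 i j)) \<in> carrier_mat ?m1 ?m1"
    using lin_carrier[OF lf] by auto
  have cg: "\<And>i j. ?g (mat_unit ?n2 i j) \<in> carrier_mat ?m2 ?m2" "\<And>i j. ?g (deph ?n2 (mat_unit ?n2 i j)) \<in> carrier_mat ?m2 ?m2"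
    using lin_carrier[OF lg] by auto
  have simps: "qin (qtens F G) = ?n1 * ?n2" "qout (qtens F G) = ?m1 * ?m2" "qmap (qtens F G) = tens_map ?n1 ?m1 ?f ?n2 ?m2 ?g"
    by (simp_all add: qtens_def)
  fix A :: "complex mat" assume A0: "A \<in> carrier_mat (qin (qtens F G)) (qin (qtens F G))"
  then have A: "A \<in> carrier_mat (?n1 * ?n2) (?n1 * ?n2)" by (simp add: simps)
  have out1: "deph (?m1 * ?m2) (tens_map ?n1 ?m1 ?f ?n2 ?m2 ?g A) = tens_map ?n1 ?m1 (\<lambda>B. deph ?m1 (?f B)) ?n2 ?m2 (\<lambda>B. deph ?m2 (?g B)) A"
    by (rule tens_deph_out) (use cf cg in auto)
  have out2: "deph (?m1 * ?m2) (tens_map ?n1 ?m1 (\<lambda>B. ?f (deph ?n1 B)) ?n2 ?m2 (\<lambda>B. ?g (deph ?n2 B)) A) =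
     tens_map ?n1 ?m1 (\<lambda>B. deph ?m1 (?f (deph ?n1 B))) ?n2 ?m2 (\<lambda>B. deph ?m2 (?g (deph ?n2 B))) A"
    by (rule tens_deph_out) (use cf cg in auto)
  have inn: "tens_map ?n1 ?m1 ?f ?n2 ?m2 ?g (deph (?n1 * ?n2) A) = tens_map ?n1 ?m1 (\<lambda>B. ?f (deph ?n1 B)) ?n2 ?m2 (\<lambda>B. ?g (deph ?n2 B)) A"
    by (rule tens_deph_in[OF lf lg A])
  {
    assume X: "X = DI"
    have "tens_map ?n1 ?m1 (\<lambda>B. deph ?m1 (?f B)) ?n2 ?m2 (\<lambda>B. deph ?m2 (?g B)) A =
          tens_map ?n1 ?m1 (\<lambda>B. deph ?m1 (?f (deph ?n1 B))) ?n2 ?m2 (\<lambda>B. deph ?m2 (?g (deph ?n2 B))) A"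
      by (rule tens_map_cong) (rule freeD(2)[OF F X], simp, rule freeD(2)[OF G X], simp)
    then show "deph (qout (qtens F G)) (qmap (qtens F G) A) = deph (qout (qtens F G)) (qmap (qtens F G) (deph (qin (qtens F G)) A))"
      unfolding simps out1 inn out2 .
  }
  {
    assume X: "X = CI"
    have "tens_map ?n1 ?m1 (\<lambda>B. ?f (deph ?n1 B)) ?n2 ?m2 (\<lambda>B. ?g (deph ?n2 B)) A =
          tens_map ?n1 ?m1 (\<lambda>B. deph ?m1 (?f (deph ?n1 B))) ?n2 ?m2 (\<lambda>B. deph ?m2 (?g (deph ?n2 B))) A"
      by (rule tens_map_cong) (rule freeD(3)[OF F X], simp, rule freeD(3)[OF G X], simp)
    then show "qmap (qtens F G) (deph (qin (qtens F G)) A) = deph (qout (qtens F G)) (qmap (qtens F G) (deph (qin (qtens F G)) A))"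
      unfolding simps inn out2 .
  }
  {
    assume X: "X = DCI"
    have "tens_map ?n1 ?m1 (\<lambda>B. deph ?m1 (?f B)) ?n2 ?m2 (\<lambda>B. deph ?m2 (?g B)) A =
          tens_map ?n1 ?m1 (\<lambda>B. ?f (deph ?n1 B)) ?n2 ?m2 (\<lambda>B. ?g (deph ?n2 B)) A"
      by (rule tens_map_cong) (rule freeD(4)[OF F X], simp, rule freeD(4)[OF G X], simp)
    then show "deph (qout (qtens F G)) (qmap (qtens F G) A) = qmap (qtens F G) (deph (qin (qtens F G)) A)"
      unfolding simps out1 inn .
  }
qed



lemma qcomp_simps: "qin (qcomp A B) = qin B" "qout (qcomp A B) = qout A"
  by (simp_all add: qcomp_def)

lemma sop_mono:
  fixes M :: "qop \<Rightarrow> real"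
  assumes post: "\<forall>\<Theta> \<Phi>. is_qop \<Theta> \<longrightarrow> free X \<Phi> \<longrightarrow> qin \<Phi> = qout \<Theta> \<longrightarrow> M (qcomp \<Phi> \<Theta>) \<le> M \<Theta>"
    and pre: "\<forall>\<Theta> \<Phi>. is_qop \<Theta> \<longrightarrow> free X \<Phi> \<longrightarrow> qout \<Phi> = qin \<Theta> \<longrightarrow> M (qcomp \<Theta> \<Phi>) \<le> M \<Theta>"
    and tens: "\<forall>\<Theta> k. is_qop \<Theta> \<longrightarrow> 0 < k \<longrightarrow> M (qtens \<Theta> (qid k)) \<le> M \<Theta>"
  shows "free_sop X F \<Longrightarrow> is_qop T \<Longrightarrow> sop_apply F T = Some T' \<Longrightarrow> M T' \<le> M T \<and> is_qop T'"
proof (induction F arbitrary: T)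
  case Nil then show ?case by simp
next
  case (Cons e es)
  obtain T1 where e: "elem_apply e T = Some T1" and es: "sop_apply es T1 = Some T'"
    using Cons.prems(3) by (auto split: option.splits)
  have fe: "free X (elem_op e)" and fes: "free_sop X es" using Cons.prems(1) by (auto simp: free_sop_def)
  have T: "is_qop T" by (rule Cons.prems(2))
  have step: "M T1 \<le> M T \<and> is_qop T1"
  proof (cases e)
    case (Post P)
    then have P: "free X P" and d: "qin P = qout T" and T1: "T1 = qcomp P T"
      using fe e by (auto split: if_splits)
    show ?thesis using post T P d is_qop_comp[OF freeD(1)[OF P] T d] unfolding T1 by blast
  next
    case (Pre P)
    then have P: "free X P" and d: "qout P = qin T" and T1: "T1 = qcomp T P"
      using fe e by (auto split: if_splits)
    show ?thesis using pre T P d is_qop_comp[OF T freeD(1)[OF P] d[symmetric]] unfolding T1 by blast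
  next
    case (TensR P)
    then have P: "free X P" and T1: "T1 = qtens T P" using fe e by auto
    have qP: "is_qop P" using freeD(1)[OF P] .
    have p: "0 < qin P" "0 < qout T" using qopD(1,2) qP T by auto
    have q1: "is_qop (qtens T (qid (qin P)))" using is_qop_tens_id T p by auto
    have f1: "free X (qtens (qid (qout T)) P)" using free_tens free_id P p by auto
    have "M (qcomp (qtens (qid (qout T)) P) (qtens T (qid (qin P)))) \<le> M (qtens T (qid (qin P)))"
      using post q1 f1 by (simp add: qtens_def qid_def)
    also have "\<dots> \<le> M T" using tens T p by auto
    finally show ?thesis unfolding T1 qtens_decomp[OF T qP, symmetric] using is_qop_tens T qP by auto
  next
    case (TensL P)
    then have P: "free X P" and T1: "T1 = qtens P T" using fe e by auto
    have qP: "is_qop P" using freeD(1)[OF P] .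
    have p: "0 < qin T" "0 < qout T" "0 < qout P" "0 < qin P" using qopD(1,2) qP T by auto
    have L: "is_qop (qtens (qid (qout P)) T)" using is_qop_tens is_qop_id T p by auto
    have fP: "free X (qtens P (qid (qin T)))" using free_tens free_id P p by auto
    have "M (qcomp (qtens (qid (qout P)) T) (qtens P (qid (qin T)))) \<le> M (qtens (qid (qout P)) T)"
      using pre L fP by (simp add: qtens_def qid_def)
    also have "M (qtens (qid (qout P)) T) = M (qcomp (qswap (qout T) (qout P)) (qcomp (qtens T (qid (qout P))) (qswap (qout P) (qin T))))"
      using qtens_left_id[OF T p(3)] by simp
    also have "\<dots> \<le> M (qcomp (qtens T (qid (qout P))) (qswap (qout P) (qin T)))"
    proof -
      have "is_qop (qcomp (qtens T (qid (qout P))) (qswap (qout P) (qin T)))"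
        by (rule is_qop_comp[OF is_qop_tens_id[OF T p(3)] is_qop_swap[OF p(3) p(1)]]) (simp add: qtens_id_simps qswap_simps)
      moreover have "free X (qswap (qout T) (qout P))" using free_swap p by auto
      moreover have "qin (qswap (qout T) (qout P)) = qout (qcomp (qtens T (qid (qout P))) (qswap (qout P) (qin T)))"
        by (simp add: qcomp_simps qswap_simps qtens_id_simps)
      ultimately show ?thesis using post by blast
    qed
    also have "\<dots> \<le> M (qtens T (qid (qout P)))"
    proof -
      have "free X (qswap (qout P) (qin T))" using free_swap p by auto
      moreover have "qout (qswap (qout P) (qin T)) = qin (qtens T (qid (qout P)))"
        by (simp add: qswap_simps qtens_id_simps)
      ultimately show ?thesis using pre is_qop_tens_id[OF T p(3)] by blast
    qed
    also have "\<dots> \<le> M T" using tens T p by auto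
    finally show ?thesis unfolding T1 qtens_decomp[OF qP T, symmetric] using is_qop_tens T qP by auto
  qed
  then have "M T' \<le> M T1 \<and> is_qop T'" using Cons.IH[OF fes _ es] by auto
  then show ?case using step by auto
qed

theorem proposition13:
  fixes X :: notion and M :: "qop \<Rightarrow> real"
  assumes nonneg: "\<forall>\<Theta>. is_qop \<Theta> \<longrightarrow> 0 \<le> M \<Theta>"
  shows "is_measure X M \<longleftrightarrow>
           (\<forall>\<Theta>. is_qop \<Theta> \<longrightarrow> (M \<Theta> = 0 \<longleftrightarrow> free X \<Theta>)) \<and>
           (\<forall>\<Theta> \<Phi>. is_qop \<Theta> \<longrightarrow> free X \<Phi> \<longrightarrow> qin \<Phi> = qout \<Theta> \<longrightarrow> M (qcomp \<Phi> \<Theta>) \<le> M \<Theta>) \<and>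
           (\<forall>\<Theta> \<Phi>. is_qop \<Theta> \<longrightarrow> free X \<Phi> \<longrightarrow> qout \<Phi> = qin \<Theta> \<longrightarrow> M (qcomp \<Theta> \<Phi>) \<le> M \<Theta>) \<and>
           (\<forall>\<Theta> k. is_qop \<Theta> \<longrightarrow> 0 < k \<longrightarrow> M (qtens \<Theta> (qid k)) \<le> M \<Theta>) \<and>
           convex_meas M"
proof
  assume H: "is_measure X M"
  have mono: "\<And>F T T'. free_sop X F \<Longrightarrow> is_qop T \<Longrightarrow> sop_apply F T = Some T' \<Longrightarrow> M T' \<le> M T"
    using H unfolding is_measure_def by blast
  have "\<forall>\<Theta> \<Phi>. is_qop \<Theta> \<longrightarrow> free X \<Phi> \<longrightarrow> qin \<Phi> = qout \<Theta> \<longrightarrow> M (qcomp \<Phi> \<Theta>) \<le> M \<Theta>"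
  proof (intro allI impI)
    fix T P assume "is_qop T" "free X P" "qin P = qout T"
    then show "M (qcomp P T) \<le> M T" using mono[of "[Post P]" T] by (simp add: free_sop_def)
  qed
  moreover have "\<forall>\<Theta> \<Phi>. is_qop \<Theta> \<longrightarrow> free X \<Phi> \<longrightarrow> qout \<Phi> = qin \<Theta> \<longrightarrow> M (qcomp \<Theta> \<Phi>) \<le> M \<Theta>"
  proof (intro allI impI)
    fix T P assume "is_qop T" "free X P" "qout P = qin T"
    then show "M (qcomp T P) \<le> M T" using mono[of "[Pre P]" T] by (simp add: free_sop_def)
  qed
  moreover have "\<forall>\<Theta> k. is_qop \<Theta> \<longrightarrow> 0 < k \<longrightarrow> M (qtens \<Theta> (qid k)) \<le> M \<Theta>"
  proof (intro allI impI)
    fix T and k :: nat assume "is_qop T" "0 < k"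
    then show "M (qtens T (qid k)) \<le> M T" using mono[of "[TensR (qid k)]" T] free_id[of k X] by (simp add: free_sop_def)
  qed
  ultimately show "(\<forall>\<Theta>. is_qop \<Theta> \<longrightarrow> (M \<Theta> = 0 \<longleftrightarrow> free X \<Theta>)) \<and>
           (\<forall>\<Theta> \<Phi>. is_qop \<Theta> \<longrightarrow> free X \<Phi> \<longrightarrow> qin \<Phi> = qout \<Theta> \<longrightarrow> M (qcomp \<Phi> \<Theta>) \<le> M \<Theta>) \<and>
           (\<forall>\<Theta> \<Phi>. is_qop \<Theta> \<longrightarrow> free X \<Phi> \<longrightarrow> qout \<Phi> = qin \<Theta> \<longrightarrow> M (qcomp \<Theta> \<Phi>) \<le> M \<Theta>) \<and>
           (\<forall>\<Theta> k. is_qop \<Theta> \<longrightarrow> 0 < k \<longrightarrow> M (qtens \<Theta> (qid k)) \<le> M \<Theta>) \<and>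
           convex_meas M"
    using H unfolding is_measure_def by blast
next
  assume H: "(\<forall>\<Theta>. is_qop \<Theta> \<longrightarrow> (M \<Theta> = 0 \<longleftrightarrow> free X \<Theta>)) \<and>
           (\<forall>\<Theta> \<Phi>. is_qop \<Theta> \<longrightarrow> free X \<Phi> \<longrightarrow> qin \<Phi> = qout \<Theta> \<longrightarrow> M (qcomp \<Phi> \<Theta>) \<le> M \<Theta>) \<and>
           (\<forall>\<Theta> \<Phi>. is_qop \<Theta> \<longrightarrow> free X \<Phi> \<longrightarrow> qout \<Phi> = qin \<Theta> \<longrightarrow> M (qcomp \<Theta> \<Phi>) \<le> M \<Theta>) \<and>
           (\<forall>\<Theta> k. is_qop \<Theta> \<longrightarrow> 0 < k \<longrightarrow> M (qtens \<Theta> (qid k)) \<le> M \<Theta>) \<and>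
           convex_meas M"
  have "\<forall>F \<Theta> \<Theta>'. free_sop X F \<longrightarrow> is_qop \<Theta> \<longrightarrow> sop_apply F \<Theta> = Some \<Theta>' \<longrightarrow> M \<Theta>' \<le> M \<Theta>"
    using sop_mono[of X M] H by blast
  then show "is_measure X M" using H nonneg unfolding is_measure_def by blast
qed


end
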